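(* Let $\Omega=(0,1)^2$, $N\ge2$, $h=1/N$, with grid points $(ih,jh)$, $0\le i,j\le N$; vectors $Z\in\mathbb{R}^{(N+1)^2}$ are indexed by grid points, $Z_I$ denotes the components at grid points in $\Omega$ and $Z_\partial$ those on $\partial\Omega$. Let $\mathcal{L}_h$ be the five-point operator $(\mathcal{L}_hZ)_{i,j}=-h^{-2}(z_{i-1,j}+z_{i+1,j}-4z_{i,j}+z_{i,j-1}+z_{i,j+1})$ at interior grid points. Let $\Omega=\Omega_1\cup\Omega_2$ be an overlapping decomposition into subdomains whose boundaries lie on grid lines; for $i=1,2$ let $Z_i,Z_{i,I},Z_{i,\partial}$ be the components of $Z$ at grid points of $\overline{\Omega_i}$, $\Omega_i$, $\partial\Omega_i$, and $\mathcal{L}_h^{(i)}$ the five-point operator at grid points of $\Omega_i$ acting on vectors indexed by grid points of $\overline{\Omega_i}$. Let $\alpha>0$, $F,Y_d\in\mathbb{R}^{(N+1)^2}$, and let $(Y,P)$ solve $$\mathcal{L}_hY=F_I-\alpha^{-1}h^{-2}P_I,\ Y_\partial=0;\qquad \mathcal{L}_h(h^{-2}P)=Y_I-Y_{d,I},\ P_\partial=0.$$ Given $Y^{(0)},P^{(0)}$ with $Y^{(0)}_\partial=P^{(0)}_\partial=0$, for $k=0,1,2,\dots$ and $i=1,2$ (in the order $i=1$ then $i=2$) define $Y^{(2k+i)},P^{(2k+i)}$ by $$\mathcal{L}_h^{(i)}Y^{(2k+i)}_i=F_{i,I}-\alpha^{-1}h^{-2}P^{(2k+i)}_{i,I},\qquad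 \mathcal{L}_h^{(i)}(h^{-2}P^{(2k+i)}_i)=Y^{(2k+i)}_{i,I}-Y_{d,i,I},$$ $Y^{(2k+i)}_{i,\partial}=Y^{(2k+i-1)}_{i,\partial}$, $P^{(2k+i)}_{i,\partial}=P^{(2k+i-1)}_{i,\partial}$, and $Y^{(2k+i)},P^{(2k+i)}$ equal to $Y^{(2k+i-1)},P^{(2k+i-1)}$ at all grid points not in $\Omega_i$. Define $$E^{(j)}=(Y-Y^{(j)})^2+\frac{\alpha^{-1}}{h^4}(P-P^{(j)})^2$$ (componentwise squares). Consider also the Schwarz alternating method for $\mathcal{L}_hW=0$, $W_\partial=0$: $\mathcal{L}_h^{(i)}W^{(2k+i)}_i=0$, $W^{(2k+i)}_{i,\partial}=W^{(2k+i-1)}_{i,\partial}$, and $W^{(2k+i)}=W^{(2k+i-1)}$ at grid points not in $\Omega_i$. If the Schwarz alternating method for $\mathcal{L}_hW=0$, $W_\partial=0$ is convergent, then the method above for $(Y,P)$ is convergent. Moreover, if the Schwarz alternating method for $\mathcal{L}_hW=0$, $W_\partial=0$ has convergence rate $\rho_{e,d}\in(0,1)$ under the maximum norm (i.e. $\max\{W^{(2k)}\}\le\rho_{e,d}\max\{W^{(2(k-1))}\}$ for $k\ge1$ and any initial guess), then for $k=1,2,\dots$, $$\max\{E^{(2k)}\}\le\rho_{e,d}\max\{E^{(2(k-1))}\},$$ where $\max$ is taken over all components.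
   Context: The $(Y,P)$ system is the discrete first-order optimality system (control eliminated) of the five-point finite difference discretization of minimizing $\frac12\|y-y_d\|_{L^2}^2+\frac\alpha2\|u\|_{L^2}^2$ subject to $-\Delta y=f+u$ in $(0,1)^2$, $y=0$ on the boundary, with the objective approximated by the trapezoidal rule. *)

theory Defs
  imports "HOL-Analysis.Analysis"
begin

text \<open>Grid vectors: a vector Z in R^((N+1)^2) is a function of the grid indices (i,j),
  0 <= i,j <= N; values outside the grid are irrelevant.\<close>
type_synonym gvec = "nat \<Rightarrow> nat \<Rightarrow> real"

definition Omega :: "(real \<times> real) set" where
  "Omega = {(x, y). 0 < x \<and> x < 1 \<and> 0 < y \<and> y < 1}"

definition grid :: "nat \<Rightarrow> (nat \<times> nat) set" where
  "grid N = {0..N} \<times> {0..N}"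

definition pts :: "nat \<Rightarrow> (real \<times> real) set \<Rightarrow> (nat \<times> nat) set" where
  "pts N D = {(i, j) \<in> grid N. (real i / real N, real j / real N) \<in> D}"

definition grid_lines :: "nat \<Rightarrow> (real \<times> real) set" where
  "grid_lines N = {(x, y). \<exists>m::nat. x = real m / real N \<or> y = real m / real N}"

definition lap :: "real \<Rightarrow> gvec \<Rightarrow> nat \<Rightarrow> nat \<Rightarrow> real" where
  "lap h Z i j = - (Z (i - 1) j + Z (i + 1) j - 4 * Z i j + Z i (j - 1) + Z i (j + 1)) / h\<^sup>2"

definition overlapping_decomp :: "nat \<Rightarrow> (real \<times> real) set \<Rightarrow> (real \<times> real) set \<Rightarrow> bool" where
  "overlapping_decomp N O1 O2 \<longleftrightarrow>
     open O1 \<and> open O2 \<and> connected O1 \<and> connected O2 \<and>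
     O1 \<union> O2 = Omega \<and> O1 \<inter> O2 \<noteq> {} \<and>
     frontier O1 \<subseteq> grid_lines N \<and> frontier O2 \<subseteq> grid_lines N"

definition optimality_system :: "nat \<Rightarrow> real \<Rightarrow> gvec \<Rightarrow> gvec \<Rightarrow> gvec \<Rightarrow> gvec \<Rightarrow> bool" where
  "optimality_system N \<alpha> F Yd Y P \<longleftrightarrow>
     (let h = 1 / real N in
      (\<forall>(i, j) \<in> pts N Omega.
          lap h Y i j = F i j - (1 / \<alpha>) * (1 / h\<^sup>2) * P i j
        \<and> lap h (\<lambda>a b. P a b / h\<^sup>2) i j = Y i j - Yd i j)
      \<and> (\<forall>(i, j) \<in> grid N - pts N Omega. Y i j = 0 \<and> P i j = 0))"

text \<open>Subdomain used in step n >= 1: step n = 2k+i uses Omega_i (i = 1 for odd n, 2 for even n).\<close>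
definition subdom :: "nat \<Rightarrow> (real \<times> real) set \<Rightarrow> (real \<times> real) set \<Rightarrow> (real \<times> real) set" where
  "subdom n O1 O2 = (if odd n then O1 else O2)"

definition schwarz_YP ::
  "nat \<Rightarrow> real \<Rightarrow> gvec \<Rightarrow> gvec \<Rightarrow> (real \<times> real) set \<Rightarrow> (real \<times> real) set
     \<Rightarrow> (nat \<Rightarrow> gvec) \<Rightarrow> (nat \<Rightarrow> gvec) \<Rightarrow> bool" where
  "schwarz_YP N \<alpha> F Yd O1 O2 Yk Pk \<longleftrightarrow>
     (let h = 1 / real N in
      (\<forall>(i, j) \<in> grid N - pts N Omega. Yk 0 i j = 0 \<and> Pk 0 i j = 0)
      \<and> (\<forall>n \<ge> 1.
           (\<forall>(i, j) \<in> pts N (subdom n O1 O2).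
               lap h (Yk n) i j = F i j - (1 / \<alpha>) * (1 / h\<^sup>2) * Pk n i j
             \<and> lap h (\<lambda>a b. Pk n a b / h\<^sup>2) i j = Yk n i j - Yd i j)
         \<and> (\<forall>(i, j) \<in> grid N - pts N (subdom n O1 O2).
               Yk n i j = Yk (n - 1) i j \<and> Pk n i j = Pk (n - 1) i j)))"

definition schwarz_W ::
  "nat \<Rightarrow> (real \<times> real) set \<Rightarrow> (real \<times> real) set \<Rightarrow> (nat \<Rightarrow> gvec) \<Rightarrow> bool" where
  "schwarz_W N O1 O2 W \<longleftrightarrow>
     (let h = 1 / real N in
      (\<forall>(i, j) \<in> grid N - pts N Omega. W 0 i j = 0)
      \<and> (\<forall>n \<ge> 1.
           (\<forall>(i, j) \<in> pts N (subdom n O1 O2). lap h (W n) i j = 0)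
         \<and> (\<forall>(i, j) \<in> grid N - pts N (subdom n O1 O2). W n i j = W (n - 1) i j)))"

definition schwarz_W_convergent :: "nat \<Rightarrow> (real \<times> real) set \<Rightarrow> (real \<times> real) set \<Rightarrow> bool" where
  "schwarz_W_convergent N O1 O2 \<longleftrightarrow>
     (\<forall>W. schwarz_W N O1 O2 W \<longrightarrow> (\<forall>(i, j) \<in> grid N. (\<lambda>n. W n i j) \<longlonglongrightarrow> 0))"

definition gmax :: "nat \<Rightarrow> gvec \<Rightarrow> real" where
  "gmax N Z = Max ((\<lambda>(i, j). Z i j) ` grid N)"

definition schwarz_W_rate :: "nat \<Rightarrow> (real \<times> real) set \<Rightarrow> (real \<times> real) set \<Rightarrow> real \<Rightarrow> bool" where
  "schwarz_W_rate N O1 O2 \<rho> \<longleftrightarrow>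
     (\<forall>W. schwarz_W N O1 O2 W \<longrightarrow>
        (\<forall>k \<ge> 1. gmax N (W (2 * k)) \<le> \<rho> * gmax N (W (2 * (k - 1)))))"

definition errE :: "nat \<Rightarrow> real \<Rightarrow> gvec \<Rightarrow> gvec \<Rightarrow> (nat \<Rightarrow> gvec) \<Rightarrow> (nat \<Rightarrow> gvec) \<Rightarrow> nat \<Rightarrow> gvec" where
  "errE N \<alpha> Y P Yk Pk n i j =
     (Y i j - Yk n i j)\<^sup>2 + ((1 / \<alpha>) / (1 / real N) ^ 4) * (P i j - Pk n i j)\<^sup>2"

end

theory Submission
  imports Defs "Jordan_Normal_Form.Determinant"
begin


lemma solve_nat:
  fixes a :: "nat \<Rightarrow> nat \<Rightarrow> real" and b :: "nat \<Rightarrow> real"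
  assumes inj: "\<And>x. (\<forall>r<n. (\<Sum>c<n. a r c * x c) = 0) \<Longrightarrow> (\<forall>c<n. x c = 0)"
  shows "\<exists>x. \<forall>r<n. (\<Sum>c<n. a r c * x c) = b r"
proof -
  define A where "A = mat n n (\<lambda>(r,c). a r c)"
  have A: "A \<in> carrier_mat n n" unfolding A_def by simp
  have mv: "(A *\<^sub>v v) $ r = (\<Sum>c<n. a r c * v $ c)" if "r < n" "v \<in> carrier_vec n" for r v
    using that unfolding A_def by (simp add: scalar_prod_def row_def lessThan_atLeast0 mult.commute)
  have "det A \<noteq> 0"
  proof
    assume "det A = 0"
    then obtain v where v: "v \<in> carrier_vec n" "v \<noteq> 0\<^sub>v n" "A *\<^sub>v v = 0\<^sub>v n"
      using det_0_iff_vec_prod_zero_field[OF A] by auto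
    have "\<forall>r<n. (\<Sum>c<n. a r c * v $ c) = 0"
    proof (intro allI impI)
      fix r assume "r < n"
      have "(A *\<^sub>v v) $ r = 0" using v(3) \<open>r<n\<close> by simp
      thus "(\<Sum>c<n. a r c * v $ c) = 0" using mv[OF \<open>r<n\<close> v(1)] by simp
    qed
    from inj[OF this] have "v = 0\<^sub>v n" using v(1) by (intro eq_vecI) auto
    with v(2) show False by simp
  qed
  from det_non_zero_imp_unit[OF A this, of "()"]
  obtain B where B: "B \<in> carrier_mat n n" "A * B = 1\<^sub>m n"
    unfolding Units_def ring_mat_def by auto
  define bv where "bv = vec n b"
  define xv where "xv = B *\<^sub>v bv"
  have xv: "xv \<in> carrier_vec n" using B unfolding xv_def bv_def by simp
  have "A *\<^sub>v xv = bv"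
    unfolding xv_def using A B bv_def
    by (metis assoc_mult_mat_vec one_mult_mat_vec vec_carrier)
  show ?thesis
  proof (intro exI allI impI)
    fix r assume r: "r < n"
    have "(A *\<^sub>v xv) $ r = b r" using \<open>A *\<^sub>v xv = bv\<close> r bv_def by simp
    thus "(\<Sum>c<n. a r c * xv $ c) = b r" using mv[OF r xv] by simp
  qed
qed



lemma pts_Omega: assumes "N > 0"
  shows "(i, j) \<in> pts N Omega \<longleftrightarrow> 0 < i \<and> i < N \<and> 0 < j \<and> j < N"
  using assms by (auto simp: pts_def grid_def Omega_def field_simps)

lemma finite_grid: "finite (grid N)" by (simp add: grid_def)

lemma lap_diff: "lap h (\<lambda>a b. U a b - V a b) i j = lap h U i j - lap h V i j"
  unfolding lap_def divide_inverse by (simp add: algebra_simps)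

lemma lap_neg: "lap h (\<lambda>a b. - U a b) i j = - lap h U i j"
  unfolding lap_def divide_inverse by (simp add: algebra_simps)

lemma lap_add: "lap h (\<lambda>a b. U a b + V a b) i j = lap h U i j + lap h V i j"
  unfolding lap_def divide_inverse by (simp add: algebra_simps)

lemma lap_alt: "lap h Z i j = (-1/h\<^sup>2) * (Z (i-1) j + Z (i+1) j - 4*Z i j + Z i (j-1) + Z i (j+1))"
  unfolding lap_def by (simp add: divide_inverse algebra_simps)

lemma lap_sum: "lap h (\<lambda>a b. \<Sum>c\<in>C. x c * F c a b) i j = (\<Sum>c\<in>C. x c * lap h (F c) i j)"
proof -
  have "(\<Sum>c\<in>C. x c * lap h (F c) i j) = (-1/h\<^sup>2) * (\<Sum>c\<in>C. x c * (F c (i-1) j + F c (i+1) j - 4*F c i j + F c i (j-1) + F c i (j+1)))"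
    unfolding lap_alt by (simp add: sum_distrib_left mult.left_commute)
  also have "(\<Sum>c\<in>C. x c * (F c (i-1) j + F c (i+1) j - 4*F c i j + F c i (j-1) + F c i (j+1)))
     = (\<Sum>c\<in>C. x c * F c (i-1) j) + (\<Sum>c\<in>C. x c * F c (i+1) j) - 4 * (\<Sum>c\<in>C. x c * F c i j)
       + (\<Sum>c\<in>C. x c * F c i (j-1)) + (\<Sum>c\<in>C. x c * F c i (j+1))"
    by (simp add: distrib_left right_diff_distrib sum.distrib sum_subtractf sum_distrib_left mult.left_commute)
  finally show ?thesis unfolding lap_alt by simp
qed

lemma maxp:
  assumes N: "N > 0" and S: "S \<subseteq> pts N Omega" and h: "h > 0"
    and L: "\<forall>(i, j)\<in>S. lap h u i j \<le> 0"
    and B: "\<forall>(i, j)\<in>grid N - S. u i j \<le> 0"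
  shows "\<forall>(i, j)\<in>grid N. u i j \<le> 0"
proof (rule ccontr)
  assume "\<not> ?thesis"
  then obtain i1 j1 where p1: "(i1, j1) \<in> grid N" "u i1 j1 > 0" by auto
  define M where "M = Max ((\<lambda>(i, j). u i j) ` grid N)"
  have Mge: "u i j \<le> M" if "(i, j) \<in> grid N" for i j
    unfolding M_def using that finite_grid by (intro Max_ge) force+
  define T where "T = {p \<in> grid N. u (fst p) (snd p) = M}"
  have "M \<in> (\<lambda>(i, j). u i j) ` grid N"
    unfolding M_def using p1 finite_grid by (intro Max_in) auto
  then have Tne: "T \<noteq> {}" unfolding T_def by auto
  have Tfin: "finite T" unfolding T_def using finite_grid by simp
  define i0 where "i0 = Max (fst ` T)"
  have "i0 \<in> fst ` T" unfolding i0_def using Tne Tfin by (intro Max_in) auto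
  then obtain j0 where T0: "(i0, j0) \<in> T" by force
  have imax: "i \<le> i0" if "(i, j) \<in> T" for i j
    unfolding i0_def using that Tfin by (metis Max_ge finite_imageI fst_conv image_eqI)
  have g0: "(i0, j0) \<in> grid N" and u0: "u i0 j0 = M" using T0 unfolding T_def by auto
  have "M \<ge> u i1 j1" using Mge p1 by simp
  then have "u i0 j0 > 0" using u0 p1 by simp
  then have "(i0, j0) \<in> S" using B g0 by (metis (no_types, lifting) DiffI case_prod_conv not_le)
  then have inS: "(i0, j0) \<in> pts N Omega" and lp: "lap h u i0 j0 \<le> 0" using S L by auto
  from inS have r: "0 < i0" "i0 < N" "0 < j0" "j0 < N" using pts_Omega[OF N] by auto
  have n1: "u (i0 - 1) j0 \<le> M" "u (i0 + 1) j0 \<le> M" "u i0 (j0 - 1) \<le> M" "u i0 (j0 + 1) \<le> M"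
    using r by (auto intro!: Mge simp: grid_def)
  from lp h have "u (i0 - 1) j0 + u (i0 + 1) j0 - 4 * u i0 j0 + u i0 (j0 - 1) + u i0 (j0 + 1) \<ge> 0"
    unfolding lap_def by (simp add: divide_le_0_iff)
  then have "u (i0 + 1) j0 = M" using n1 u0 by linarith
  then have "(i0 + 1, j0) \<in> T" unfolding T_def using r by (auto simp: grid_def)
  from imax[OF this] show False by simp
qed

lemma pts_sub_grid: "pts N D \<subseteq> grid N" by (auto simp: pts_def)

lemma pts_mono: "D \<subseteq> E \<Longrightarrow> pts N D \<subseteq> pts N E" by (auto simp: pts_def)

lemma exist_harm:
  assumes N: "N > 0" and S: "S \<subseteq> pts N Omega" and h: "h > 0"
  shows "\<exists>u. (\<forall>(i, j)\<in>S. lap h u i j = 0) \<and> (\<forall>(i, j)\<in>grid N - S. u i j = g i j)"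
proof -
  have finS: "finite S" using S pts_sub_grid finite_grid by (meson finite_subset)
  define n where "n = card S"
  obtain e where e: "bij_betw e {0..<n} S" using ex_bij_betw_nat_finite[OF finS] n_def by blast
  define idx where "idx = inv_into {0..<n} e"
  have idx: "idx p < n \<and> e (idx p) = p" if "p \<in> S" for p
    using that e unfolding idx_def
    by (metis atLeastLessThan_iff bij_betw_def bij_betw_inv_into_right inv_into_into)
  have eidx: "idx (e c) = c \<and> e c \<in> S" if "c < n" for c
    using that e unfolding idx_def
    by (metis atLeastLessThan_iff bij_betwE bij_betw_inv_into_left zero_le)
  define U where "U x = (\<lambda>i j. if (i, j) \<in> S then x (idx (i, j)) else (0::real))" for x :: "nat \<Rightarrow> real"
  define dl where "dl c = (\<lambda>c'. if c' = c then 1 else (0::real))" for c :: nat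
  have Uexp: "U x i j = (\<Sum>c<n. x c * U (dl c) i j)" for x i j
  proof (cases "(i, j) \<in> S")
    case True
    then have "idx (i, j) < n" using idx by blast
    have "(\<Sum>c<n. x c * U (dl c) i j) = (\<Sum>c<n. if c = idx (i, j) then x c else 0)"
      by (rule sum.cong) (auto simp: U_def dl_def True)
    moreover have "(\<Sum>c<n. if c = idx (i, j) then x c else 0) = x (idx (i, j))"
      using \<open>idx (i, j) < n\<close> by (simp add: sum.delta)
    moreover have "U x i j = x (idx (i, j))" using True unfolding U_def by simp
    ultimately show ?thesis by simp
  next
    case False
    then show ?thesis by (simp add: U_def)
  qed
  have lapU: "lap h (U x) i j = (\<Sum>c<n. x c * lap h (U (dl c)) i j)" for x i j
  proof -
    have eq: "U x = (\<lambda>a b. \<Sum>c<n. x c * U (dl c) a b)" by (intro ext) (rule Uexp)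
    show ?thesis unfolding eq by (rule lap_sum)
  qed
  define G where "G = (\<lambda>i j. if (i, j) \<in> S then 0 else g i j)"
  define a where "a r c = lap h (U (dl c)) (fst (e r)) (snd (e r))" for r c
  define b where "b r = - lap h G (fst (e r)) (snd (e r))" for r
  have "\<exists>x. \<forall>r<n. (\<Sum>c<n. a r c * x c) = b r"
  proof (rule solve_nat)
    fix x assume H: "\<forall>r<n. (\<Sum>c<n. a r c * x c) = 0"
    have L0: "\<forall>(i, j)\<in>S. lap h (U x) i j = 0"
    proof (intro ballI, clarify)
      fix i j assume ij: "(i, j) \<in> S"
      define r where "r = idx (i, j)"
      have r: "r < n" "e r = (i, j)" using idx[OF ij] r_def by auto
      have "lap h (U x) i j = (\<Sum>c<n. a r c * x c)"
        using lapU[of x i j] r by (simp add: a_def mult.commute)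
      then show "lap h (U x) i j = 0" using H r by simp
    qed
    have B0: "\<forall>(i, j)\<in>grid N - S. U x i j = 0" by (auto simp: U_def)
    have le: "\<forall>(i, j)\<in>grid N. U x i j \<le> 0"
      by (rule maxp[OF N S h]) (use L0 in \<open>auto simp: case_prod_unfold U_def\<close>)
    have ge: "\<forall>(i, j)\<in>grid N. - U x i j \<le> 0"
      by (rule maxp[OF N S h]) (use L0 in \<open>auto simp: case_prod_unfold U_def lap_neg\<close>)
    show "\<forall>c<n. x c = 0"
    proof (intro allI impI)
      fix c assume c: "c < n"
      then have ec: "e c \<in> S" "idx (e c) = c" using eidx by auto
      then have g: "e c \<in> grid N" using S pts_sub_grid by blast
      have "U x (fst (e c)) (snd (e c)) = x c" using ec by (simp add: U_def)
      then show "x c = 0" using le ge g by (cases "e c") fastforce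
    qed
  qed
  then obtain x where x: "\<forall>r<n. (\<Sum>c<n. a r c * x c) = b r" by blast
  define u where "u = (\<lambda>i j. U x i j + G i j)"
  show ?thesis
  proof (intro exI conjI)
    show "\<forall>(i, j)\<in>S. lap h u i j = 0"
    proof (intro ballI, clarify)
      fix i j assume ij: "(i, j) \<in> S"
      define r where "r = idx (i, j)"
      have r: "r < n" "e r = (i, j)" using idx[OF ij] r_def by auto
      have "lap h u i j = lap h (U x) i j + lap h G i j" unfolding u_def by (rule lap_add)
      also have "lap h (U x) i j = (\<Sum>c<n. a r c * x c)"
        using lapU[of x i j] r by (simp add: a_def mult.commute)
      also have "lap h G i j = - b r" using r by (simp add: b_def)
      finally show "lap h u i j = 0" using x r by simp
    qed
    show "\<forall>(i, j)\<in>grid N - S. u i j = g i j"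
      by (auto simp: u_def U_def G_def)
  qed
qed

lemma alg:
  fixes e0 e1 e2 e3 e4 q0 q1 q2 q3 q4 \<alpha> h :: real
  assumes "\<alpha> > 0" "e1 + e2 - 4*e0 + e3 + e4 = h\<^sup>2 * q0 / \<alpha>" "q1 + q2 - 4*q0 + q3 + q4 = - h\<^sup>2 * e0"
  shows "e1\<^sup>2 + e2\<^sup>2 - 4*e0\<^sup>2 + e3\<^sup>2 + e4\<^sup>2 + (q1\<^sup>2 + q2\<^sup>2 - 4*q0\<^sup>2 + q3\<^sup>2 + q4\<^sup>2) / \<alpha> \<ge> 0"
proof -
  have E: "e1\<^sup>2 + e2\<^sup>2 - 4*e0\<^sup>2 + e3\<^sup>2 + e4\<^sup>2 = (e1-e0)\<^sup>2 + (e2-e0)\<^sup>2 + (e3-e0)\<^sup>2 + (e4-e0)\<^sup>2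
      + 2*e0*(e1 + e2 - 4*e0 + e3 + e4)" by (simp add: power2_eq_square algebra_simps)
  have Q: "q1\<^sup>2 + q2\<^sup>2 - 4*q0\<^sup>2 + q3\<^sup>2 + q4\<^sup>2 = (q1-q0)\<^sup>2 + (q2-q0)\<^sup>2 + (q3-q0)\<^sup>2 + (q4-q0)\<^sup>2
      + 2*q0*(q1 + q2 - 4*q0 + q3 + q4)" by (simp add: power2_eq_square algebra_simps)
  have "2*e0*(h\<^sup>2 * q0 / \<alpha>) + (2*q0*(- h\<^sup>2 * e0)) / \<alpha> = 0" by (simp add: field_simps)
  then have "e1\<^sup>2 + e2\<^sup>2 - 4*e0\<^sup>2 + e3\<^sup>2 + e4\<^sup>2 + (q1\<^sup>2 + q2\<^sup>2 - 4*q0\<^sup>2 + q3\<^sup>2 + q4\<^sup>2) / \<alpha>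
     = (e1-e0)\<^sup>2 + (e2-e0)\<^sup>2 + (e3-e0)\<^sup>2 + (e4-e0)\<^sup>2
       + ((q1-q0)\<^sup>2 + (q2-q0)\<^sup>2 + (q3-q0)\<^sup>2 + (q4-q0)\<^sup>2) / \<alpha>"
    unfolding E Q assms(2,3) by (simp add: divide_inverse algebra_simps)
  also have "\<dots> \<ge> 0" using assms(1) by (intro add_nonneg_nonneg divide_nonneg_pos) auto
  finally show ?thesis .
qed

lemma subharm:
  fixes Y P Yn Pn F Yd :: gvec
  assumes a: "\<alpha> > 0" and h: "h > 0"
    and A1: "lap h Y i j = F i j - (1 / \<alpha>) * (1 / h\<^sup>2) * P i j"
    and A2: "lap h (\<lambda>a b. P a b / h\<^sup>2) i j = Y i j - Yd i j"
    and A3: "lap h Yn i j = F i j - (1 / \<alpha>) * (1 / h\<^sup>2) * Pn i j"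
    and A4: "lap h (\<lambda>a b. Pn a b / h\<^sup>2) i j = Yn i j - Yd i j"
  shows "lap h (\<lambda>a b. (Y a b - Yn a b)\<^sup>2 + ((1 / \<alpha>) / h ^ 4) * (P a b - Pn a b)\<^sup>2) i j \<le> 0"
proof -
  define e where "e a b = Y a b - Yn a b" for a b
  define q where "q a b = (P a b - Pn a b) / h\<^sup>2" for a b
  have h2: "h\<^sup>2 > 0" using h by simp
  have "lap h e i j = lap h Y i j - lap h Yn i j" unfolding e_def by (rule lap_diff)
  also have "\<dots> = - (1 / \<alpha>) * (1 / h\<^sup>2) * (P i j - Pn i j)" unfolding A1 A3 by (simp add: divide_inverse algebra_simps)
  also have "\<dots> = - (1 / \<alpha>) * q i j" unfolding q_def by simp
  finally have L1: "lap h e i j = - (1 / \<alpha>) * q i j" .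
  have L2: "lap h q i j = e i j"
  proof -
    have "q = (\<lambda>a b. P a b / h\<^sup>2 - Pn a b / h\<^sup>2)" unfolding q_def by (intro ext) (simp add: diff_divide_distrib)
    then show ?thesis using A2 A4 unfolding e_def by (simp add: lap_diff)
  qed
  have s1: "e (i-1) j + e (i+1) j - 4*e i j + e i (j-1) + e i (j+1) = h\<^sup>2 * q i j / \<alpha>"
    using L1 h2 unfolding lap_def by (simp add: field_simps)
  have s2: "q (i-1) j + q (i+1) j - 4*q i j + q i (j-1) + q i (j+1) = - h\<^sup>2 * e i j"
    using L2 h2 unfolding lap_def by (simp add: field_simps)
  have K: "(1 / \<alpha>) / h ^ 4 * (P a b - Pn a b)\<^sup>2 = (q a b)\<^sup>2 / \<alpha>" for a b
    unfolding q_def using h by (simp add: power_divide field_simps flip: power_mult)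
  have fe: "(\<lambda>a b. (Y a b - Yn a b)\<^sup>2 + ((1 / \<alpha>) / h ^ 4) * (P a b - Pn a b)\<^sup>2)
        = (\<lambda>a b. (e a b)\<^sup>2 + (q a b)\<^sup>2 / \<alpha>)" unfolding e_def K by simp
  have "0 \<le> (e (i-1) j)\<^sup>2 + (e (i+1) j)\<^sup>2 - 4*(e i j)\<^sup>2 + (e i (j-1))\<^sup>2 + (e i (j+1))\<^sup>2
     + ((q (i-1) j)\<^sup>2 + (q (i+1) j)\<^sup>2 - 4*(q i j)\<^sup>2 + (q i (j-1))\<^sup>2 + (q i (j+1))\<^sup>2) / \<alpha>"
    by (rule alg[OF a s1 s2])
  then have "0 \<le> ((e (i-1) j)\<^sup>2 + (q (i-1) j)\<^sup>2 / \<alpha>) + ((e (i+1) j)\<^sup>2 + (q (i+1) j)\<^sup>2 / \<alpha>)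
     - 4 * ((e i j)\<^sup>2 + (q i j)\<^sup>2 / \<alpha>) + ((e i (j-1))\<^sup>2 + (q i (j-1))\<^sup>2 / \<alpha>)
     + ((e i (j+1))\<^sup>2 + (q i (j+1))\<^sup>2 / \<alpha>)"
    by (simp add: divide_inverse algebra_simps)
  then show ?thesis unfolding fe lap_alt using h2
    by (simp add: mult_nonpos_nonneg)
qed

definition hext :: "nat \<Rightarrow> (real \<times> real) set \<Rightarrow> gvec \<Rightarrow> gvec" where
  "hext N D g = (SOME u. (\<forall>(i, j)\<in>pts N D. lap (1 / real N) u i j = 0)
                      \<and> (\<forall>(i, j)\<in>grid N - pts N D. u i j = g i j))"

lemma hext_prop:
  assumes N: "N > 0" and D: "D \<subseteq> Omega"
  shows "(\<forall>(i, j)\<in>pts N D. lap (1 / real N) (hext N D g) i j = 0)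
       \<and> (\<forall>(i, j)\<in>grid N - pts N D. hext N D g i j = g i j)"
proof -
  let ?P = "\<lambda>u. (\<forall>(i, j)\<in>pts N D. lap (1 / real N) u i j = 0) \<and> (\<forall>(i, j)\<in>grid N - pts N D. u i j = g i j)"
  have ex: "\<exists>u. ?P u" by (rule exist_harm[OF N pts_mono[OF D]]) (use N in simp)
  have "?P (SOME u. ?P u)" by (rule someI_ex[of ?P]) (rule ex)
  then show ?thesis unfolding hext_def .
qed

lemma subdom_sub: "overlapping_decomp N O1 O2 \<Longrightarrow> subdom n O1 O2 \<subseteq> Omega"
  unfolding overlapping_decomp_def subdom_def by auto

fun Wseq :: "nat \<Rightarrow> (real \<times> real) set \<Rightarrow> (real \<times> real) set \<Rightarrow> gvec \<Rightarrow> nat \<Rightarrow> gvec" where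
  "Wseq N O1 O2 V 0 = V"
| "Wseq N O1 O2 V (Suc n) = hext N (subdom (Suc n) O1 O2) (Wseq N O1 O2 V n)"

lemma Wseq_ok:
  assumes N: "N > 0" and dec: "overlapping_decomp N O1 O2"
    and V: "\<forall>(i, j)\<in>grid N - pts N Omega. V i j = 0"
  shows "schwarz_W N O1 O2 (Wseq N O1 O2 V)"
  unfolding schwarz_W_def Let_def
proof (intro conjI allI impI)
  show "\<forall>(i, j)\<in>grid N - pts N Omega. Wseq N O1 O2 V 0 i j = 0" using V by simp
  fix n :: nat assume "1 \<le> n"
  then obtain m where n: "n = Suc m" by (cases n) auto
  note H = hext_prop[OF N subdom_sub[OF dec, of n], where g = "Wseq N O1 O2 V m"]
  then show "\<forall>(i, j)\<in>pts N (subdom n O1 O2). lap (1 / real N) (Wseq N O1 O2 V n) i j = 0"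
    "\<forall>(i, j)\<in>grid N - pts N (subdom n O1 O2). Wseq N O1 O2 V n i j = Wseq N O1 O2 V (n - 1) i j"
    using n by simp_all
qed

lemma optI:
  assumes "optimality_system N \<alpha> F Yd Y P"
  shows "(i, j) \<in> pts N Omega \<Longrightarrow> lap (1 / real N) Y i j = F i j - (1 / \<alpha>) * (1 / (1 / real N)\<^sup>2) * P i j
          \<and> lap (1 / real N) (\<lambda>a b. P a b / (1 / real N)\<^sup>2) i j = Y i j - Yd i j"
    and "(i, j) \<in> grid N - pts N Omega \<Longrightarrow> Y i j = 0 \<and> P i j = 0"
  using assms unfolding optimality_system_def Let_def by blast+

lemma ypI:
  assumes "schwarz_YP N \<alpha> F Yd O1 O2 Yk Pk"
  shows "(i, j) \<in> grid N - pts N Omega \<Longrightarrow> Yk 0 i j = 0 \<and> Pk 0 i j = 0"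
    and "n \<ge> 1 \<Longrightarrow> (i, j) \<in> pts N (subdom n O1 O2) \<Longrightarrow>
          lap (1 / real N) (Yk n) i j = F i j - (1 / \<alpha>) * (1 / (1 / real N)\<^sup>2) * Pk n i j
          \<and> lap (1 / real N) (\<lambda>a b. Pk n a b / (1 / real N)\<^sup>2) i j = Yk n i j - Yd i j"
    and "n \<ge> 1 \<Longrightarrow> (i, j) \<in> grid N - pts N (subdom n O1 O2) \<Longrightarrow>
          Yk n i j = Yk (n - 1) i j \<and> Pk n i j = Pk (n - 1) i j"
  using assms unfolding schwarz_YP_def Let_def by blast+

lemma bdry_zero:
  assumes YP: "schwarz_YP N \<alpha> F Yd O1 O2 Yk Pk" and dec: "overlapping_decomp N O1 O2"
    and ij: "(i, j) \<in> grid N - pts N Omega"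
  shows "Yk n i j = 0 \<and> Pk n i j = 0"
proof (induction n)
  case 0 then show ?case using ypI(1)[OF YP ij] by simp
next
  case (Suc n)
  have "(i, j) \<in> grid N - pts N (subdom (Suc n) O1 O2)"
    using ij pts_mono[OF subdom_sub[OF dec]] by blast
  from ypI(3)[OF YP _ this] Suc show ?case by simp
qed

lemma errE_fun: "errE N \<alpha> Y P Yk Pk n =
   (\<lambda>a b. (Y a b - Yk n a b)\<^sup>2 + ((1 / \<alpha>) / (1 / real N) ^ 4) * (P a b - Pk n a b)\<^sup>2)"
  by (intro ext) (simp add: errE_def)

lemma compare:
  assumes N: "N > 0" and a: "\<alpha> > 0" and dec: "overlapping_decomp N O1 O2"
    and opt: "optimality_system N \<alpha> F Yd Y P" and YP: "schwarz_YP N \<alpha> F Yd O1 O2 Yk Pk"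
    and m: "even m"
  shows "\<forall>(i, j)\<in>grid N. errE N \<alpha> Y P Yk Pk (m + n) i j \<le> Wseq N O1 O2 (errE N \<alpha> Y P Yk Pk m) n i j"
proof (induction n)
  case 0 then show ?case by simp
next
  case (Suc n)
  define D where "D = subdom (Suc n) O1 O2"
  have Deq: "subdom (m + Suc n) O1 O2 = D" unfolding D_def subdom_def using m by simp
  define E where "E = errE N \<alpha> Y P Yk Pk"
  define W where "W = Wseq N O1 O2 (errE N \<alpha> Y P Yk Pk m)"
  define h where "h = 1 / real N"
  have h: "h > 0" using N h_def by simp
  have DO: "D \<subseteq> Omega" unfolding D_def by (rule subdom_sub[OF dec])
  note HW = hext_prop[OF N DO, of "W n"]
  have WS: "W (Suc n) = hext N D (W n)" unfolding W_def D_def by simp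
  define u where "u a b = E (m + Suc n) a b - W (Suc n) a b" for a b
  have "\<forall>(i, j)\<in>grid N. u i j \<le> 0"
  proof (rule maxp[OF N pts_mono[OF DO] h])
    show "\<forall>(i, j)\<in>pts N D. lap h u i j \<le> 0"
    proof (intro ballI, clarify)
      fix i j assume ij: "(i, j) \<in> pts N D"
      have ijO: "(i, j) \<in> pts N Omega" using ij pts_mono[OF DO] by blast
      have ijS: "(i, j) \<in> pts N (subdom (m + Suc n) O1 O2)" using ij Deq by simp
      note o = optI(1)[OF opt ijO]
      note y = ypI(2)[OF YP _ ijS]
      have "lap h (E (m + Suc n)) i j \<le> 0"
        unfolding E_def errE_fun h_def[symmetric]
        by (rule subharm[OF a h]) (use o y h_def in auto)
      moreover have "lap h (W (Suc n)) i j = 0" using HW ij unfolding WS h_def by auto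
      ultimately show "lap h u i j \<le> 0" unfolding u_def lap_diff by simp
    qed
    show "\<forall>(i, j)\<in>grid N - pts N D. u i j \<le> 0"
    proof (intro ballI, clarify)
      fix i j assume ij: "(i, j) \<in> grid N" "(i, j) \<notin> pts N D"
      have ijS: "(i, j) \<in> grid N - pts N (subdom (m + Suc n) O1 O2)" using ij Deq by simp
      note y = ypI(3)[OF YP _ ijS]
      have "E (m + Suc n) i j = E (m + n) i j" unfolding E_def errE_def using y by simp
      moreover have "W (Suc n) i j = W n i j" using HW ij unfolding WS by auto
      moreover have "E (m + n) i j \<le> W n i j" using Suc ij(1) unfolding E_def W_def by auto
      ultimately show "u i j \<le> 0" unfolding u_def by simp
    qed
  qed
  then show ?case unfolding u_def E_def W_def by auto
qed

lemma gmax_mono: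
  assumes "\<forall>(i, j)\<in>grid N. f i j \<le> g i j"
  shows "gmax N f \<le> gmax N g"
proof -
  have ne: "grid N \<noteq> {}" by (auto simp: grid_def)
  have "gmax N f \<in> (\<lambda>(i, j). f i j) ` grid N"
    unfolding gmax_def using ne finite_grid by (intro Max_in) auto
  then obtain i j where ij: "(i, j) \<in> grid N" "gmax N f = f i j" by auto
  have "g i j \<le> gmax N g" unfolding gmax_def using ij finite_grid by (intro Max_ge) force+
  then show ?thesis using ij assms by auto
qed

lemma sq_conv:
  fixes a E :: "nat \<Rightarrow> real"
  assumes E: "E \<longlonglongrightarrow> 0" and le: "\<And>n. (a n)\<^sup>2 \<le> E n"
  shows "a \<longlonglongrightarrow> 0"
proof -
  have s: "(\<lambda>n. sqrt (E n)) \<longlonglongrightarrow> 0" using tendsto_real_sqrt[OF E] by simp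
  have b: "\<bar>a n\<bar> \<le> sqrt (E n)" for n using real_sqrt_le_mono[OF le[of n]] by simp
  have s2: "(\<lambda>n. - sqrt (E n)) \<longlonglongrightarrow> 0" using tendsto_minus[OF s] by simp
  have b1: "\<forall>\<^sub>F n in sequentially. - sqrt (E n) \<le> a n"
  proof (rule always_eventually, rule allI)
    fix n have "- a n \<le> sqrt (E n)" by (rule abs_le_D2[OF b])
    then show "- sqrt (E n) \<le> a n" by linarith
  qed
  have b2: "\<forall>\<^sub>F n in sequentially. a n \<le> sqrt (E n)" using b by (simp add: abs_le_iff)
  show ?thesis by (rule tendsto_sandwich[OF b1 b2 s2 s])
qed

theorem theorem4p2:
  fixes N :: nat and \<alpha> :: real and F Yd Y P :: gvec
    and O1 O2 :: "(real \<times> real) set" and Yk Pk :: "nat \<Rightarrow> gvec"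
  assumes "N \<ge> 2" and "\<alpha> > 0"
    and "overlapping_decomp N O1 O2"
    and "optimality_system N \<alpha> F Yd Y P"
    and "schwarz_YP N \<alpha> F Yd O1 O2 Yk Pk"
  shows "(schwarz_W_convergent N O1 O2 \<longrightarrow>
            (\<forall>(i, j) \<in> grid N. (\<lambda>n. Yk n i j) \<longlonglongrightarrow> Y i j \<and> (\<lambda>n. Pk n i j) \<longlonglongrightarrow> P i j))
       \<and> (\<forall>\<rho>. 0 < \<rho> \<and> \<rho> < 1 \<and> schwarz_W_rate N O1 O2 \<rho> \<longrightarrow>
            (\<forall>k \<ge> 1. gmax N (errE N \<alpha> Y P Yk Pk (2 * k))
                        \<le> \<rho> * gmax N (errE N \<alpha> Y P Yk Pk (2 * (k - 1)))))"
proof -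
  have N: "N > 0" using assms(1) by simp
  note a = assms(2) and dec = assms(3) and opt = assms(4) and YP = assms(5)
  define E where "E = errE N \<alpha> Y P Yk Pk"
  define c where "c = (1 / \<alpha>) / (1 / real N) ^ 4"
  have c: "c > 0" unfolding c_def using a N by simp
  have Ebd: "\<forall>(i, j)\<in>grid N - pts N Omega. E m i j = 0" for m
    using optI(2)[OF opt] bdry_zero[OF YP dec] unfolding E_def errE_def by auto
  have Enn: "E n i j \<ge> 0" for n i j unfolding E_def errE_def c_def[symmetric] using c by simp
  have EY: "(Y i j - Yk n i j)\<^sup>2 \<le> E n i j" for n i j
    unfolding E_def errE_def c_def[symmetric] using c by simp
  have EP: "(P i j - Pk n i j)\<^sup>2 \<le> E n i j / c" for n i j
    unfolding E_def errE_def c_def[symmetric] using c by (simp add: field_simps)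
  have WS: "schwarz_W N O1 O2 (Wseq N O1 O2 (E m))" for m
    by (rule Wseq_ok[OF N dec Ebd])
  have cmp: "\<forall>(i, j)\<in>grid N. E (m + n) i j \<le> Wseq N O1 O2 (E m) n i j" if "even m" for m n
    unfolding E_def by (rule compare[OF N a dec opt YP that])
  show ?thesis
  proof (intro conjI impI allI)
    assume conv: "schwarz_W_convergent N O1 O2"
    show "\<forall>(i, j) \<in> grid N. (\<lambda>n. Yk n i j) \<longlonglongrightarrow> Y i j \<and> (\<lambda>n. Pk n i j) \<longlonglongrightarrow> P i j"
    proof (intro ballI, clarify)
      fix i j assume ij: "(i, j) \<in> grid N"
      have W0: "(\<lambda>n. Wseq N O1 O2 (E 0) n i j) \<longlonglongrightarrow> 0"
        using conv WS[of 0] ij unfolding schwarz_W_convergent_def by auto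
      have le: "E n i j \<le> Wseq N O1 O2 (E 0) n i j" for n using cmp[of 0 n] ij by auto
      have E0: "(\<lambda>n. E n i j) \<longlonglongrightarrow> 0"
        by (rule tendsto_sandwich[OF _ _ tendsto_const W0]) (use Enn le in auto)
      have "(\<lambda>n. Y i j - Yk n i j) \<longlonglongrightarrow> 0" by (rule sq_conv[OF E0 EY])
      from tendsto_diff[OF tendsto_const[of "Y i j"] this]
      have Yc: "(\<lambda>n. Yk n i j) \<longlonglongrightarrow> Y i j" by simp
      have "(\<lambda>n. E n i j / c) \<longlonglongrightarrow> 0" using tendsto_divide[OF E0 tendsto_const[of c]] c by simp
      then have "(\<lambda>n. P i j - Pk n i j) \<longlonglongrightarrow> 0" by (rule sq_conv[OF _ EP])
      from tendsto_diff[OF tendsto_const[of "P i j"] this]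
      have "(\<lambda>n. Pk n i j) \<longlonglongrightarrow> P i j" by simp
      with Yc show "(\<lambda>n. Yk n i j) \<longlonglongrightarrow> Y i j \<and> (\<lambda>n. Pk n i j) \<longlonglongrightarrow> P i j" by simp
    qed
  next
    fix \<rho> :: real
    assume r: "0 < \<rho> \<and> \<rho> < 1 \<and> schwarz_W_rate N O1 O2 \<rho>"
    fix k :: nat assume k: "k \<ge> 1"
      define m where "m = 2 * (k - 1)"
      have m: "even m" "2 * k = m + 2" using k unfolding m_def by auto
      have rate: "gmax N (Wseq N O1 O2 (E m) 2) \<le> \<rho> * gmax N (Wseq N O1 O2 (E m) 0)"
        using r WS[of m] unfolding schwarz_W_rate_def by (metis le_refl mult_1_right diff_self_eq_0 mult_0_right)
      have "gmax N (E (m + 2)) \<le> gmax N (Wseq N O1 O2 (E m) 2)"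
        by (rule gmax_mono) (rule cmp[OF m(1)])
      also have "\<dots> \<le> \<rho> * gmax N (E m)" using rate by simp
      finally have fin: "gmax N (E (m + 2)) \<le> \<rho> * gmax N (E m)" .
      have e1: "E (m + 2) = errE N \<alpha> Y P Yk Pk (2 * k)" using m(2) by (simp add: E_def)
      have e2: "E m = errE N \<alpha> Y P Yk Pk (2 * (k - 1))" by (simp add: E_def m_def)
      show "gmax N (errE N \<alpha> Y P Yk Pk (2 * k)) \<le> \<rho> * gmax N (errE N \<alpha> Y P Yk Pk (2 * (k - 1)))"
        using fin unfolding e1 e2 .
  qed
qed

end
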